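(* Let $G$ be a graph and $m \geq 1$ an integer. If there exists an optimal packing coloring of $FSSD_m(G)$ which assigns color $1$ to all subdivided vertices, then $\chi_\rho(FSSD_m(G)) = \chi_\rho(FSSD_{m+1}(G))$.
   Context: All graphs are finite and simple. For a positive integer $i$, an $i$-packing in a graph is a set of vertices any two distinct members of which are at distance greater than $i$. A $k$-packing coloring of a graph $H$ is a map $c:V(H)\to\{1,\dots,k\}$ such that $c(u)=c(v)=i$ with $u \neq v$ implies $d_H(u,v)>i$; the packing chromatic number $\chi_\rho(H)$ is the least such $k$, and a $\chi_\rho(H)$-packing coloring is called optimal. For a positive integer $m$, $FSSD_m(G)$ is obtained from $G$ by replacing each edge $uv$ of $G$ by a copy of $K_{2,m}$: the edge $uv$ is deleted and $m$ new vertices are added, each adjacent to exactly $u$ and $v$. These new vertices are called the subdivided vertices of $FSSD_m(G)$. *)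

theory Defs
  imports Main "HOL-Library.Extended_Nat"
begin

type_synonym 'v graph = "'v set \<times> 'v set set"

definition verts :: "'v graph \<Rightarrow> 'v set" where "verts G = fst G"
definition edges :: "'v graph \<Rightarrow> 'v set set" where "edges G = snd G"

definition simple_graph :: "'v graph \<Rightarrow> bool" where
  "simple_graph G \<longleftrightarrow> finite (verts G) \<and>
     (\<forall>e\<in>edges G. \<exists>u v. e = {u, v} \<and> u \<noteq> v \<and> u \<in> verts G \<and> v \<in> verts G)"

definition adj :: "'v graph \<Rightarrow> 'v \<Rightarrow> 'v \<Rightarrow> bool" where
  "adj G u v \<longleftrightarrow> {u, v} \<in> edges G"

inductive walk_len :: "'v graph \<Rightarrow> nat \<Rightarrow> 'v \<Rightarrow> 'v \<Rightarrow> bool" for G where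
  walk0: "u \<in> verts G \<Longrightarrow> walk_len G 0 u u"
| walkS: "adj G u w \<Longrightarrow> walk_len G n w v \<Longrightarrow> walk_len G (Suc n) u v"

text \<open>Distance (infinite if no path).\<close>
definition gdist :: "'v graph \<Rightarrow> 'v \<Rightarrow> 'v \<Rightarrow> enat" where
  "gdist G u v = Inf (enat ` {n. walk_len G n u v})"

definition packing_coloring :: "'v graph \<Rightarrow> nat \<Rightarrow> ('v \<Rightarrow> nat) \<Rightarrow> bool" where
  "packing_coloring G k c \<longleftrightarrow>
     (\<forall>v\<in>verts G. c v \<in> {1..k}) \<and>
     (\<forall>u\<in>verts G. \<forall>v\<in>verts G. u \<noteq> v \<and> c u = c v \<longrightarrow> gdist G u v > enat (c u))"

definition packing_chromatic :: "'v graph \<Rightarrow> nat" where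
  "packing_chromatic G = (LEAST k. \<exists>c. packing_coloring G k c)"

definition optimal_packing_coloring :: "'v graph \<Rightarrow> ('v \<Rightarrow> nat) \<Rightarrow> bool" where
  "optimal_packing_coloring G c \<longleftrightarrow> packing_coloring G (packing_chromatic G) c"

text \<open>FSSD_m(G): original vertex u is Inl u; the i-th (i < m) subdivided vertex
on edge e is Inr (e, i), adjacent exactly to the two ends of e.\<close>

definition subdivided :: "nat \<Rightarrow> 'v graph \<Rightarrow> ('v + 'v set \<times> nat) set" where
  "subdivided m G = {Inr (e, i) | e i. e \<in> edges G \<and> i < m}"

definition FSSD :: "nat \<Rightarrow> 'v graph \<Rightarrow> ('v + 'v set \<times> nat) graph" where
  "FSSD m G = (Inl ` verts G \<union> subdivided m G,
               {{Inl u, Inr (e, i)} | u e i. e \<in> edges G \<and> u \<in> e \<and> i < m})"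

end

theory Submission
  imports Defs
begin

lemma walk_hom:
  assumes "walk_len G1 n u v"
    and "\<And>x. x \<in> verts G1 \<Longrightarrow> f x \<in> verts G2"
    and "\<And>x y. adj G1 x y \<Longrightarrow> adj G2 (f x) (f y)"
  shows "walk_len G2 n (f u) (f v)"
  using assms(1)
proof (induction rule: walk_len.induct)
  case (walk0 u) then show ?case using assms(2) by (simp add: walk_len.walk0)
next
  case (walkS u w n v) then show ?case using assms(3) by (meson walk_len.walkS)
qed

lemma gdist_hom:
  assumes "\<And>x. x \<in> verts G1 \<Longrightarrow> f x \<in> verts G2"
    and "\<And>x y. adj G1 x y \<Longrightarrow> adj G2 (f x) (f y)"
  shows "gdist G2 (f u) (f v) \<le> gdist G1 u v"
proof -
  have "enat ` {n. walk_len G1 n u v} \<subseteq> enat ` {n. walk_len G2 n (f u) (f v)}"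
    using walk_hom[of G1 _ u v f G2, OF _ assms] by blast
  then show ?thesis unfolding gdist_def by (rule Inf_superset_mono)
qed

lemma adj_FSSD:
  "adj (FSSD m G) x y \<longleftrightarrow> (\<exists>u e i. e \<in> edges G \<and> u \<in> e \<and> i < m \<and>
     ((x = Inl u \<and> y = Inr (e, i)) \<or> (y = Inl u \<and> x = Inr (e, i))))"
  unfolding adj_def FSSD_def edges_def[of "(_, _)"]
  by (auto simp: doubleton_eq_iff)

lemma verts_FSSD: "verts (FSSD m G) = Inl ` verts G \<union> subdivided m G"
  unfolding FSSD_def verts_def by simp

lemma gdist_Inr:
  assumes "u = Inr a" "v = Inr b" "u \<noteq> v"
  shows "enat 1 < gdist (FSSD n G) u v"
proof -
  have "enat 2 \<le> gdist (FSSD n G) u v"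
    unfolding gdist_def
  proof (rule Inf_greatest, clarify)
    fix k assume w: "walk_len (FSSD n G) k u v"
    show "enat 2 \<le> enat k"
    proof (cases k)
      case 0 then show ?thesis using w assms(3) by (auto elim: walk_len.cases)
    next
      case (Suc j)
      show ?thesis
      proof (cases j)
        case 0
        then have "walk_len (FSSD n G) (Suc 0) u v" using w Suc by simp
        then obtain y where "adj (FSSD n G) u y" "walk_len (FSSD n G) 0 y v"
          by (auto elim: walk_len.cases)
        then have "adj (FSSD n G) u v" by (auto elim: walk_len.cases)
        then show ?thesis using assms unfolding adj_FSSD by auto
      qed (use Suc in auto)
    qed
  qed
  moreover have "enat 1 < enat 2" by simp
  ultimately show ?thesis by (meson less_le_trans)
qed

theorem proposition4:
  fixes G :: "'v graph" and m :: nat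
  assumes "simple_graph G"
    and "m \<ge> 1"
    and "\<exists>c. optimal_packing_coloring (FSSD m G) c \<and> (\<forall>x\<in>subdivided m G. c x = 1)"
  shows "packing_chromatic (FSSD m G) = packing_chromatic (FSSD (Suc m) G)"
proof -
  let ?H = "FSSD m G" and ?H' = "FSSD (Suc m) G"
  obtain c where copt: "optimal_packing_coloring ?H c" and c1: "\<forall>x\<in>subdivided m G. c x = 1"
    using assms(3) by blast
  define k where "k = packing_chromatic ?H"
  have pc: "packing_coloring ?H k c" using copt unfolding optimal_packing_coloring_def k_def .
  define \<phi> :: "'v + 'v set \<times> nat \<Rightarrow> 'v + 'v set \<times> nat" where
    "\<phi> x = (case x of Inl u \<Rightarrow> Inl u | Inr (e, i) \<Rightarrow> Inr (e, if i = m then 0 else i))" for x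
  have phiv: "\<phi> x \<in> verts ?H" if "x \<in> verts ?H'" for x
    using that assms(2) unfolding verts_FSSD subdivided_def \<phi>_def by auto
  have phia: "adj ?H (\<phi> x) (\<phi> y)" if "adj ?H' x y" for x y
    using that assms(2) unfolding adj_FSSD \<phi>_def
    by (auto; metis less_Suc_eq not_one_le_zero bot_nat_0.not_eq_extremum)+
  define c' where "c' x = (case x of Inr (e, i) \<Rightarrow> if i = m then 1 else c x | _ \<Rightarrow> c x)" for x
  have c'phi: "c' x = c (\<phi> x)" if "x \<in> verts ?H'" for x
    using that c1 assms(2) unfolding verts_FSSD subdivided_def \<phi>_def c'_def
    by (auto split: sum.splits)
  have pc': "packing_coloring ?H' k c'"
    unfolding packing_coloring_def
  proof (intro conjI ballI impI)
    fix v assume v: "v \<in> verts ?H'"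
    then show "c' v \<in> {1..k}" using pc phiv c'phi unfolding packing_coloring_def by auto
  next
    fix u v assume u: "u \<in> verts ?H'" and v: "v \<in> verts ?H'" and uv: "u \<noteq> v \<and> c' u = c' v"
    show "enat (c' u) < gdist ?H' u v"
    proof (cases "\<phi> u = \<phi> v")
      case False
      have "enat (c (\<phi> u)) < gdist ?H (\<phi> u) (\<phi> v)"
        using pc phiv[OF u] phiv[OF v] False uv c'phi[OF u] c'phi[OF v]
        unfolding packing_coloring_def by auto
      also have "\<dots> \<le> gdist ?H' u v" by (rule gdist_hom[OF phiv phia])
      finally show ?thesis using c'phi[OF u] by simp
    next
      case True
      then obtain a b where ue: "u = Inr a" and ve: "v = Inr b"
        using uv unfolding \<phi>_def by (auto split: sum.splits prod.splits)
      have "c' u = 1" using u c1 unfolding ue verts_FSSD subdivided_def c'_def by auto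
      then show ?thesis using gdist_Inr[of u a v b "Suc m" G] ue ve uv by simp
    qed
  qed
  have le1: "packing_chromatic ?H' \<le> k"
    unfolding packing_chromatic_def using pc' by (intro Least_le) blast
  obtain d where d: "packing_coloring ?H' (packing_chromatic ?H') d"
    unfolding packing_chromatic_def using LeastI_ex[of "\<lambda>k. Ex (packing_coloring ?H' k)"] pc' by blast
  have vsub: "x \<in> verts ?H'" if "x \<in> verts ?H" for x
    using that unfolding verts_FSSD subdivided_def by auto
  have asub: "adj ?H' x y" if "adj ?H x y" for x y
    using that unfolding adj_FSSD by (auto intro: less_SucI)
  have gd: "gdist ?H' x y \<le> gdist ?H x y" for x y
    using gdist_hom[of ?H "\<lambda>x. x" ?H' x y] vsub asub by simp
  have "packing_coloring ?H (packing_chromatic ?H') d"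
    using d vsub gd unfolding packing_coloring_def by (meson order_less_le_trans)
  then have "k \<le> packing_chromatic ?H'"
    unfolding k_def packing_chromatic_def by (intro Least_le) blast
  with le1 show ?thesis unfolding k_def by simp
qed

end
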